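(* Let $\theta$ be a nonnegative real number. Then there exists an infinite word $\mathbf{w}$ such that $\mathcal{A}(\mathbf{w}) = \theta$, where $\mathcal{A}$ denotes the abelian critical exponent. Moreover, $\mathbf{w}$ can be taken over an alphabet of at most three letters.
   Context: For a finite word $u$ and a letter (or word) $a$, $|u|_a$ denotes the number of occurrences of $a$ in $u$ as a factor. Two finite words $u,v$ are abelian equivalent, written $u\sim v$, if they are permutations of each other. An abelian power of exponent $e$ (a positive integer) and period $m$ is a word of the form $u_0u_1\cdots u_{e-1}$ where $u_0,\dots,u_{e-1}$ are nonempty, pairwise abelian equivalent, and $m=|u_0|$. For an infinite word $\mathbf{w}$ and a positive integer $m$, let $A_{\mathbf{w}}(m)$ be the supremum of the exponents of abelian powers of period $m$ occurring (as factors) in $\mathbf{w}$. The abelian critical exponent of $\mathbf{w}$ is $\mathcal{A}(\mathbf{w}) = \limsup_{m\to\infty} A_{\mathbf{w}}(m)/m$ (a value in $[0,\infty]$). *)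

theory Defs
  imports "HOL-Analysis.Analysis" "HOL-Library.Multiset"
begin

definition factor :: "(nat \<Rightarrow> 'a) \<Rightarrow> nat \<Rightarrow> nat \<Rightarrow> 'a list" where
  "factor w i n = map w [i..<i+n]"

definition abelian_equiv :: "'a list \<Rightarrow> 'a list \<Rightarrow> bool" where
  "abelian_equiv u v \<longleftrightarrow> mset u = mset v"

definition has_abelian_power :: "(nat \<Rightarrow> 'a) \<Rightarrow> nat \<Rightarrow> nat \<Rightarrow> bool" where
  "has_abelian_power w m e \<longleftrightarrow> 0 < m \<and> 0 < e \<and>
     (\<exists>i. \<forall>j<e. \<forall>k<e. abelian_equiv (factor w (i + j*m) m) (factor w (i + k*m) m))"

definition abelian_period_exp :: "(nat \<Rightarrow> 'a) \<Rightarrow> nat \<Rightarrow> ereal" where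
  "abelian_period_exp w m = (SUP e \<in> {e. has_abelian_power w m e}. ereal (real e))"

definition abelian_critical_exponent :: "(nat \<Rightarrow> 'a) \<Rightarrow> ereal" where
  "abelian_critical_exponent w = limsup (\<lambda>m. abelian_period_exp w m / ereal (real m))"

end

theory Submission
  imports Defs "HOL-Number_Theory.Cong" "HOL-Computational_Algebra.Primes" "HOL-Real_Asymp.Real_Asymp"
begin


definition FF :: "nat \<Rightarrow> nat \<Rightarrow> nat \<Rightarrow> nat" where "FF m q x = x * q div m"

definition Pw :: "nat \<Rightarrow> nat \<Rightarrow> nat \<Rightarrow> nat \<Rightarrow> nat" where
 "Pw m p r x = (if even x then FF m p (x div 2 + 1) - FF m p (x div 2)
                else 2 * (FF m r (x div 2 + 1) - FF m r (x div 2)))"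

lemma FF_mono: "x \<le> y \<Longrightarrow> FF m q x \<le> FF m q y"
  unfolding FF_def by (simp add: div_le_mono)

lemma FF_step: "q \<le> m \<Longrightarrow> FF m q (Suc x) \<le> FF m q x + 1"
proof -
  assume "q \<le> m"
  have "Suc x * q = x*q + q" by simp
  have "(x*q + q) div m \<le> (x*q + m) div m" by (simp add: \<open>q \<le> m\<close> div_le_mono)
  also have "\<dots> \<le> x*q div m + 1"
    by (metis div_add_self2 div_by_0 le_add1 le_refl)
  finally show ?thesis unfolding FF_def by (simp add: add.commute)
qed

lemma factor_Suc: "factor w s (Suc L) = factor w s L @ [w (s+L)]"
  unfolding factor_def by simp

lemma Pw_vals: "p \<le> m \<Longrightarrow> r \<le> m \<Longrightarrow> Pw m p r x \<in> {0,1,2}"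
proof -
  assume a: "p \<le> m" "r \<le> m"
  have 1: "FF m p (x div 2 + 1) - FF m p (x div 2) \<le> 1" using FF_step[OF a(1), of "x div 2"] by simp
  have 2: "FF m r (x div 2 + 1) - FF m r (x div 2) \<le> 1" using FF_step[OF a(2), of "x div 2"] by simp
  show ?thesis using 1 2 unfolding Pw_def by (auto simp: le_Suc_eq)
qed

lemma count1: assumes "p \<le> m" "r \<le> m"
  shows "count (mset (factor (Pw m p r) s L)) 1 = FF m p ((s+L+1) div 2) - FF m p ((s+1) div 2)"
proof (induction L)
  case 0
  then show ?case by (simp add: factor_def)
next
  case (Suc L)
  have m1: "FF m p ((s+1) div 2) \<le> FF m p ((s+L+1) div 2)" by (rule FF_mono) simp
  show ?case
  proof (cases "even (s+L)")
    case True
    then have e1: "(s + Suc L + 1) div 2 = (s+L) div 2 + 1" and e2: "(s+L+1) div 2 = (s+L) div 2"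
      by presburger+
    have "Pw m p r (s+L) = FF m p ((s+L) div 2 + 1) - FF m p ((s+L) div 2)" using True by (simp add: Pw_def)
    moreover have "FF m p ((s+L) div 2) \<le> FF m p ((s+L) div 2 + 1)" by (rule FF_mono) simp
    moreover have "FF m p ((s+L) div 2 + 1) \<le> FF m p ((s+L) div 2) + 1" using FF_step[OF assms(1)] by simp
    ultimately show ?thesis using Suc m1 unfolding factor_Suc e1 e2 by (auto simp: le_Suc_eq Suc_diff_le)
  next
    case False
    then have e1: "(s + Suc L + 1) div 2 = (s+L+1) div 2" by presburger
    have "Pw m p r (s+L) \<noteq> 1" using False by (simp add: Pw_def)
    then show ?thesis using Suc unfolding factor_Suc e1 by simp
  qed
qed

lemma count2: assumes "p \<le> m" "r \<le> m"
  shows "count (mset (factor (Pw m p r) s L)) 2 = FF m r ((s+L) div 2) - FF m r (s div 2)"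
proof (induction L)
  case 0
  then show ?case by (simp add: factor_def)
next
  case (Suc L)
  have m1: "FF m r (s div 2) \<le> FF m r ((s+L) div 2)" by (rule FF_mono) simp
  show ?case
  proof (cases "even (s+L)")
    case True
    then have e1: "(s + Suc L) div 2 = (s+L) div 2" by presburger
    have "Pw m p r (s+L) \<noteq> 2" using True FF_step[OF assms(1), of "(s+L) div 2"] by (simp add: Pw_def)
    then show ?thesis using Suc unfolding factor_Suc e1 by simp
  next
    case False
    then have e1: "(s + Suc L) div 2 = (s+L) div 2 + 1" by presburger
    have "Pw m p r (s+L) = 2 * (FF m r ((s+L) div 2 + 1) - FF m r ((s+L) div 2))" using False by (simp add: Pw_def)
    moreover have "FF m r ((s+L) div 2) \<le> FF m r ((s+L) div 2 + 1)" by (rule FF_mono) simp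
    moreover have "FF m r ((s+L) div 2 + 1) \<le> FF m r ((s+L) div 2) + 1" using FF_step[OF assms(2)] by simp
    ultimately show ?thesis using Suc m1 unfolding factor_Suc e1 by (auto simp: le_Suc_eq Suc_diff_le)
  qed
qed



definition dd :: "nat \<Rightarrow> nat \<Rightarrow> nat" where "dd m x = min (x mod m) (m - x mod m)"

lemma dioph:
  fixes m q x0 M k T :: nat
  assumes m: "0 < m" and T: "1 \<le> T" and h: "\<forall>t\<le>T. (x0 + t*M)*q div m = x0*q div m + t*k"
  shows "T * dd m (M*q) < m"
proof -
  define u where "u = x0*q mod m"
  define \<rho> where "\<rho> = M*q mod m"
  define a where "a = x0*q div m"
  define b where "b = M*q div m"
  have key: "(x0 + t*M)*q div m = a + t*b + (u + t*\<rho>) div m" for t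
  proof -
    have e1: "x0*q = a*m + u" unfolding a_def u_def by simp
    have e2: "M*q = b*m + \<rho>" unfolding b_def \<rho>_def by simp
    have "(x0 + t*M)*q = x0*q + t*(M*q)" by (simp add: algebra_simps)
    also have "\<dots> = (u + t*\<rho>) + (a + t*b)*m" unfolding e1 e2 by (simp add: algebra_simps)
    finally show ?thesis using m by simp
  qed
  have um: "u < m" "\<rho> < m" using m by (auto simp: u_def \<rho>_def)
  have h1: "a + b + (u + \<rho>) div m = a + k" using h[rule_format, of 1] key[of 1] T by (simp add: a_def)
  have hT: "a + T*b + (u + T*\<rho>) div m = a + T*k" using h[rule_format, of T] key[of T] by (simp add: a_def)
  have le1: "(u + \<rho>) div m \<le> 1"
  proof -
    have "u + \<rho> < 2*m" using um by simp
    then have "(u + \<rho>) div m < 2" using m by (simp add: less_mult_imp_div_less mult.commute)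
    then show ?thesis by simp
  qed
  have kb: "k = b + (u + \<rho>) div m" using h1 by simp
  have hT2: "(u + T*\<rho>) div m = T * ((u + \<rho>) div m)" using hT kb by (simp add: algebra_simps)
  show ?thesis
  proof (cases "(u + \<rho>) div m = 0")
    case True
    then have "(u + T*\<rho>) div m = 0" using hT2 by simp
    then have "u + T*\<rho> < m" using m by (simp add: div_eq_0_iff)
    then have "T*\<rho> < m" by simp
    moreover have "dd m (M*q) \<le> \<rho>" unfolding dd_def \<rho>_def by simp
    ultimately show ?thesis by (meson le_less_trans mult_le_mono2)
  next
    case False
    then have "(u + \<rho>) div m = 1" using le1 by simp
    then have "(u + T*\<rho>) div m = T" using hT2 by simp
    then have "T*m \<le> u + T*\<rho>" by (metis div_times_less_eq_dividend mult.commute)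
    then have "T*(m - \<rho>) \<le> u" by (simp add: diff_mult_distrib2)
    then have "T*(m - \<rho>) < m" using um by simp
    moreover have "dd m (M*q) \<le> m - \<rho>" unfolding dd_def \<rho>_def by simp
    ultimately show ?thesis by (meson le_less_trans mult_le_mono2)
  qed
qed

lemma prog_z:
  fixes z :: "nat \<Rightarrow> nat"
  assumes "\<forall>k. z (k+2) = z k + M"
  shows "z (2*t) = z 0 + t*M"
  by (induction t) (use assms in \<open>auto simp: algebra_simps\<close>)

lemma prog:
  fixes G z :: "nat \<Rightarrow> nat"
  assumes h: "\<forall>k<n. G (z (Suc k)) = G (z k) + c" and z: "\<forall>k. z (k+2) = z k + M"
  shows "2*t \<le> n \<Longrightarrow> G (z 0 + t*M) = G (z 0) + t*(2*c)"
proof (induction t)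
  case 0
  then show ?case by simp
next
  case (Suc t)
  have a: "G (z (Suc (2*t))) = G (z (2*t)) + c" using h Suc.prems by simp
  have b: "G (z (Suc (Suc (2*t)))) = G (z (Suc (2*t))) + c" using h Suc.prems by simp
  have zz: "z (2 * Suc t) = z 0 + Suc t * M" using prog_z[OF z] by blast
  have zz': "z (2*t) = z 0 + t*M" using prog_z[OF z] by blast
  have "G (z 0 + Suc t * M) = G (z (Suc (Suc (2*t))))" using zz by simp
  also have "\<dots> = G (z (2*t)) + 2*c" using a b by simp
  also have "\<dots> = G (z 0) + t*(2*c) + 2*c" using Suc zz' by simp
  finally show ?case by simp
qed

lemma abeq_count: "abelian_equiv u v \<Longrightarrow> count (mset u) x = count (mset v) x"
  unfolding abelian_equiv_def by simp

lemma Pw_bound1: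
  assumes m: "0 < m" and pr: "p < m" "r < m"
    and eq: "\<forall>k<n. \<forall>k'<n. abelian_equiv (factor (Pw m p r) (s+k*M) M) (factor (Pw m p r) (s+k'*M) M)"
    and n: "2 \<le> n"
  shows "n div 2 * dd m (M*p) < m"
    "m dvd M \<Longrightarrow> odd (M div m) \<Longrightarrow> odd p \<Longrightarrow> False"
proof -
  define c where "c = count (mset (factor (Pw m p r) s M)) 1"
  define z where "z k = (s + k*M + 1) div 2" for k
  have cc: "count (mset (factor (Pw m p r) (s+k*M) M)) 1 = c" if "k < n" for k
    using abeq_count[OF eq[rule_format, of k 0]] that n unfolding c_def by simp
  have hz: "\<forall>k<n. FF m p (z (Suc k)) = FF m p (z k) + c"
  proof (intro allI impI)
    fix k assume k: "k < n"
    have "count (mset (factor (Pw m p r) (s+k*M) M)) 1 = FF m p (z (Suc k)) - FF m p (z k)"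
      unfolding count1[OF less_imp_le[OF pr(1)] less_imp_le[OF pr(2)]] z_def by (simp add: algebra_simps)
    moreover have "FF m p (z k) \<le> FF m p (z (Suc k))" unfolding z_def by (rule FF_mono) simp
    ultimately show "FF m p (z (Suc k)) = FF m p (z k) + c" using cc[OF k] by simp
  qed
  have zM: "\<forall>k. z (k+2) = z k + M" unfolding z_def by (auto simp: algebra_simps)
  have P1: "FF m p (z 0 + t*M) = FF m p (z 0) + t*(2*c)" if "2*t \<le> n" for t
    using prog[OF hz zM that] .
  show "n div 2 * dd m (M*p) < m"
  proof (rule dioph[OF m])
    show "1 \<le> n div 2" using n by simp
    show "\<forall>t\<le>n div 2. (z 0 + t*M)*p div m = z 0 * p div m + t*(2*c)"
    proof (intro allI impI)
      fix t assume "t \<le> n div 2"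
      then have "2*t \<le> n" by simp
      from P1[OF this] show "(z 0 + t*M)*p div m = z 0 * p div m + t*(2*c)" unfolding FF_def .
    qed
  qed
  show "m dvd M \<Longrightarrow> odd (M div m) \<Longrightarrow> odd p \<Longrightarrow> False"
  proof -
    assume d: "m dvd M" "odd (M div m)" "odd p"
    have "FF m p (z 0 + 1*M) = FF m p (z 0) + 1*(2*c)" using P1[of 1] n by simp
    moreover have "FF m p (z 0 + M) = FF m p (z 0) + (M div m) * p"
    proof -
      obtain j where j: "M = m*j" using d(1) by blast
      have "(z 0 + M)*p = z 0 * p + (j*p)*m" using j by (simp add: algebra_simps)
      then show ?thesis unfolding FF_def using m j by simp
    qed
    ultimately have "2*c = (M div m)*p" by simp
    then show False using d by (metis even_mult_iff dvd_triv_left)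
  qed
qed

lemma Pw_bound2:
  assumes m: "0 < m" and pr: "p < m" "r < m"
    and eq: "\<forall>k<n. \<forall>k'<n. abelian_equiv (factor (Pw m p r) (s+k*M) M) (factor (Pw m p r) (s+k'*M) M)"
    and n: "2 \<le> n"
  shows "n div 2 * dd m (M*r) < m"
proof -
  define c where "c = count (mset (factor (Pw m p r) s M)) 2"
  define z where "z k = (s + k*M) div 2" for k
  have cc: "count (mset (factor (Pw m p r) (s+k*M) M)) 2 = c" if "k < n" for k
    using abeq_count[OF eq[rule_format, of k 0]] that n unfolding c_def by simp
  have hz: "\<forall>k<n. FF m r (z (Suc k)) = FF m r (z k) + c"
  proof (intro allI impI)
    fix k assume k: "k < n"
    have "count (mset (factor (Pw m p r) (s+k*M) M)) 2 = FF m r (z (Suc k)) - FF m r (z k)"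
      unfolding count2[OF less_imp_le[OF pr(1)] less_imp_le[OF pr(2)]] z_def by (simp add: algebra_simps)
    moreover have "FF m r (z k) \<le> FF m r (z (Suc k))" unfolding z_def by (rule FF_mono) simp
    ultimately show "FF m r (z (Suc k)) = FF m r (z k) + c" using cc[OF k] by simp
  qed
  have zM: "\<forall>k. z (k+2) = z k + M" unfolding z_def by (auto simp: algebra_simps)
  have P1: "FF m r (z 0 + t*M) = FF m r (z 0) + t*(2*c)" if "2*t \<le> n" for t
    using prog[OF hz zM that] .
  show "n div 2 * dd m (M*r) < m"
  proof (rule dioph[OF m])
    show "1 \<le> n div 2" using n by simp
    show "\<forall>t\<le>n div 2. (z 0 + t*M)*r div m = z 0 * r div m + t*(2*c)"
    proof (intro allI impI)
      fix t assume "t \<le> n div 2"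
      then have "2*t \<le> n" by simp
      from P1[OF this] show "(z 0 + t*M)*r div m = z 0 * r div m + t*(2*c)" unfolding FF_def .
    qed
  qed
qed



definition qf :: "nat \<Rightarrow> real" where "qf K = sqrt (real K * sqrt (real K))"

lemma qf_sq: "(qf K)^2 = real K * sqrt (real K)"
  unfolding qf_def by simp

lemma qf_mono: "K \<le> L \<Longrightarrow> qf K \<le> qf L"
  unfolding qf_def by (intro real_sqrt_le_mono mult_mono) auto

lemma qf_pos: "1 \<le> K \<Longrightarrow> 0 < qf K"
  unfolding qf_def by simp

lemma sum_step: "1 / (real (Suc n) * sqrt (real (Suc n))) \<le> 2 / sqrt (real n) - 2 / sqrt (real (Suc n))"
  if "1 \<le> n" for n
proof -
  define a where "a = sqrt (real n)"
  define b where "b = sqrt (real (Suc n))"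
  have a0: "0 < a" using that by (simp add: a_def)
  have ab: "a < b" unfolding a_def b_def by simp
  have b0: "0 < b" using a0 ab by linarith
  have aa: "a*a = real n" unfolding a_def using real_sqrt_mult_self by simp
  have bb: "b*b = real n + 1" unfolding b_def using real_sqrt_mult_self by simp
  have d1: "(b - a)*(a+b) = 1"
  proof -
    have "(b - a)*(a+b) = b*b - a*a" by (simp add: algebra_simps)
    then show ?thesis using aa bb by simp
  qed
  have apb: "0 < a + b" using a0 b0 by simp
  have e0: "2 / a - 2 / b = 2*(b - a)/(a*b)" using a0 b0 by (simp add: field_simps)
  have e1: "b - a = 1 / (a + b)" using d1 apb by (simp add: field_simps)
  have e: "2 / a - 2 / b = 2 / (a*b*(a+b))" using e0 e1 by simp
  have le: "a*b*(a+b) \<le> b*b*(b+b)" using a0 ab b0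
    by (intro mult_mono add_mono) auto
  have sb: "real (Suc n) * sqrt (real (Suc n)) = b*b*b" unfolding b_def
    using real_sqrt_mult_self by simp
  have pos: "0 < a*b*(a+b)" using a0 b0 by simp
  have "1 / (b*b*b) = 2 / (b*b*(b+b))" using b0 by (simp add: field_simps)
  also have "\<dots> \<le> 2 / (a*b*(a+b))" using le pos by (intro divide_left_mono) auto
  finally show ?thesis using e sb unfolding a_def b_def by simp
qed

lemma sum_bound_aux: "1 \<le> n \<Longrightarrow> (\<Sum>K=1..n. 1 / (real K * sqrt (real K))) \<le> 3 - 2 / sqrt (real n)"
proof (induction n rule: dec_induct)
  case base
  then show ?case by simp
next
  case (step n)
  have "(\<Sum>K=1..Suc n. 1 / (real K * sqrt (real K))) = (\<Sum>K=1..n. 1 / (real K * sqrt (real K))) + 1 / (real (Suc n) * sqrt (real (Suc n)))"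
    by simp
  then show ?case using step.IH sum_step[OF step.hyps(1)] by linarith
qed

lemma sum_bound: "(\<Sum>K=1..n. 1 / (real K * sqrt (real K))) \<le> 3"
proof (cases "n = 0")
  case True then show ?thesis by simp
next
  case False
  then have "1 \<le> n" by simp
  show ?thesis
  proof -
    have "0 \<le> 2 / sqrt (real n)" by simp
    then show ?thesis using sum_bound_aux[OF \<open>1 \<le> n\<close>] by linarith
  qed
qed

lemma card_lt_real: "real (card {x::nat. x < m \<and> real x < \<beta>}) \<le> \<beta> + 1" if "0 \<le> (\<beta>::real)"
proof -
  have "{x::nat. x < m \<and> real x < \<beta>} \<subseteq> {..<nat \<lceil>\<beta>\<rceil>}"
  proof
    fix x assume "x \<in> {x::nat. x < m \<and> real x < \<beta>}"
    then have "real_of_int (int x) < \<beta>" by simp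
    then have "int x < \<lceil>\<beta>\<rceil>" by (simp only: less_ceiling_iff)
    then show "x \<in> {..<nat \<lceil>\<beta>\<rceil>}" by (simp add: zless_nat_eq_int_zless)
  qed
  then have "card {x::nat. x < m \<and> real x < \<beta>} \<le> nat \<lceil>\<beta>\<rceil>"
    by (metis card_lessThan card_mono finite_lessThan)
  also have "real (nat \<lceil>\<beta>\<rceil>) \<le> \<beta> + 1" using that by linarith
  finally show ?thesis by simp
qed

lemma card_dd: fixes \<beta> :: real assumes "0 \<le> \<beta>" "0 < m"
  shows "real (card {x::nat. x < m \<and> real (dd m x) < \<beta>}) \<le> 2*\<beta> + 2"
proof -
  let ?A = "{x::nat. x < m \<and> real x < \<beta>}"
  let ?B = "{x::nat. x < m \<and> real (m - x) < \<beta>}"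
  have sub: "{x::nat. x < m \<and> real (dd m x) < \<beta>} \<subseteq> ?A \<union> ?B"
    unfolding dd_def by (auto simp: min_def split: if_splits)
  have "card ?B \<le> card {y::nat. y < Suc m \<and> real y < \<beta>}"
  proof (rule card_inj_on_le[where f = "\<lambda>x. m - x"])
    show "inj_on (\<lambda>x. m - x) ?B" by (auto simp: inj_on_def)
    show "(\<lambda>x. m - x) ` ?B \<subseteq> {y::nat. y < Suc m \<and> real y < \<beta>}" by auto
  qed simp
  then have "real (card ?B) \<le> real (card {y::nat. y < Suc m \<and> real y < \<beta>})" by simp
  also have "\<dots> \<le> \<beta> + 1" using card_lt_real assms by simp
  finally have cB: "real (card ?B) \<le> \<beta> + 1" .
  have "card {x::nat. x < m \<and> real (dd m x) < \<beta>} \<le> card (?A \<union> ?B)"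
    by (rule card_mono[OF _ sub]) simp
  also have "\<dots> \<le> card ?A + card ?B" by (rule card_Un_le)
  finally show ?thesis using cB card_lt_real[OF assms(1), of m] by linarith
qed

lemma inj_mod: fixes m K :: nat assumes "prime m" "1 \<le> K" "K < m"
  shows "inj_on (\<lambda>x. K * x mod m) {..<m}"
proof (rule inj_onI)
  fix x y assume x: "x \<in> {..<m}" and y: "y \<in> {..<m}" and e: "K * x mod m = K * y mod m"
  have cop: "coprime K m"
  proof -
    have "\<not> m dvd K"
    proof
      assume "m dvd K"
      then have "m \<le> K" using assms(2) by (intro dvd_imp_le) auto
      then show False using assms(3) by simp
    qed
    then have "coprime m K" using assms(1) by (simp add: prime_imp_coprime)
    then show ?thesis by (simp add: coprime_commute)
  qed
  have "[K * x = K * y] (mod m)" using e by (simp add: cong_def)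
  then have "[x = y] (mod m)" using cong_mult_lcancel_nat[OF cop] by simp
  then show "x = y" using cong_less_modulus_unique_nat x y by simp
qed

lemma dd_mod: "dd m (x mod m) = dd m x" unfolding dd_def by simp

lemma card_bad: fixes m K :: nat and f :: "nat \<Rightarrow> nat" and \<beta> :: real assumes "prime m" "1 \<le> K" "K < m" "0 \<le> \<beta>" and S: "S \<subseteq> {..<m}" "finite S"
  and fS: "inj_on f S"  "f ` S \<subseteq> {..<m}"
  shows "real (card {t \<in> S. real (dd m (K * f t)) < \<beta>}) \<le> 2*\<beta> + 2"
proof -
  have m0: "0 < m" using assms by simp
  have "real (card {t \<in> S. real (dd m (K * f t)) < \<beta>}) \<le> card {x::nat. x < m \<and> real (dd m x) < \<beta>}"
    unfolding of_nat_le_iff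
  proof (rule card_inj_on_le[where f = "\<lambda>t. K * f t mod m"])
    show "inj_on (\<lambda>t. K * f t mod m) {t \<in> S. real (dd m (K * f t)) < \<beta>}"
    proof (rule inj_onI)
      fix x y assume x: "x \<in> {t \<in> S. real (dd m (K * f t)) < \<beta>}" and y: "y \<in> {t \<in> S. real (dd m (K * f t)) < \<beta>}"
        and e: "K * f x mod m = K * f y mod m"
      have "f x = f y" using inj_onD[OF inj_mod[OF assms(1-3)] e] x y fS(2) by auto
      then show "x = y" using fS(1) x y by (auto dest: inj_onD)
    qed
    show "(\<lambda>t. K * f t mod m) ` {t \<in> S. real (dd m (K * f t)) < \<beta>} \<subseteq> {x::nat. x < m \<and> real (dd m x) < \<beta>}"
      using m0 by (auto simp: dd_mod)
  qed simp
  also have "\<dots> \<le> 2*\<beta> + 2" using card_dd[OF assms(4) m0] .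
  finally show ?thesis .
qed



definition good :: "nat \<Rightarrow> nat \<Rightarrow> nat \<Rightarrow> bool" where
 "good m p r \<longleftrightarrow> prime m \<and> p < m \<and> odd p \<and> r < m \<and>
   (\<forall>K. 1 \<le> K \<and> K < m \<longrightarrow> real m / (8 * qf K) \<le> real (max (dd m (K*p)) (dd m (K*r))))"

lemma sq_bound: "(2*(x::real)+2)^2 \<le> 8*x^2 + 8"
proof -
  have "0 \<le> (x - 1)^2" by simp
  then show ?thesis by (simp add: power2_eq_square algebra_simps)
qed

lemma good_exists: assumes pm: "prime m" and m100: "100 \<le> m" shows "\<exists>p r. good m p r"
proof -
  define \<beta> where "\<beta> K = real m / (8 * qf K)" for K
  define X1 where "X1 K = {t \<in> {..<m div 2}. real (dd m (K*(2*t+1))) < \<beta> K}" for K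
  define X2 where "X2 K = {r \<in> {..<m}. real (dd m (K*id r)) < \<beta> K}" for K
  define Bad where "Bad = (\<Union>K\<in>{1..<m}. X1 K \<times> X2 K)"
  define Cs where "Cs = {..<m div 2} \<times> {..<m}"
  have b0: "0 \<le> \<beta> K" for K unfolding \<beta>_def qf_def by simp
  have c1: "real (card (X1 K)) \<le> 2 * \<beta> K + 2" if "1 \<le> K" "K < m" for K
    unfolding X1_def
  proof (rule card_bad[OF pm that b0])
    show "{..<m div 2} \<subseteq> {..<m}" by auto
    show "inj_on (\<lambda>t. 2*t+1) {..<m div 2}" by (auto simp: inj_on_def)
    show "(\<lambda>t. 2*t+1) ` {..<m div 2} \<subseteq> {..<m}" by auto
  qed simp
  have c2: "real (card (X2 K)) \<le> 2 * \<beta> K + 2" if "1 \<le> K" "K < m" for K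
    unfolding X2_def
    by (rule card_bad[OF pm that b0]) auto
  have "card Bad \<le> (\<Sum>K\<in>{1..<m}. card (X1 K \<times> X2 K))"
    unfolding Bad_def by (rule card_UN_le) simp
  then have "real (card Bad) \<le> (\<Sum>K\<in>{1..<m}. real (card (X1 K)) * real (card (X2 K)))"
    by (simp add: card_cartesian_product flip: of_nat_sum of_nat_mult)
  also have "\<dots> \<le> (\<Sum>K\<in>{1..<m}. (2 * \<beta> K + 2)^2)"
  proof (rule sum_mono)
    fix K assume "K \<in> {1..<m}"
    then have "1 \<le> K" "K < m" by auto
    then show "real (card (X1 K)) * real (card (X2 K)) \<le> (2 * \<beta> K + 2)^2"
      unfolding power2_eq_square using c1 c2 b0[of K] by (intro mult_mono) auto
  qed
  also have "\<dots> \<le> (\<Sum>K\<in>{1..<m}. real m ^ 2 / 8 * (1 / (real K * sqrt (real K))) + 8)"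
  proof (rule sum_mono)
    fix K assume "K \<in> {1..<m}"
    then have K1: "1 \<le> K" by auto
    have "8 * (\<beta> K)^2 = real m ^ 2 / 8 * (1 / (real K * sqrt (real K)))"
    proof -
      have "(\<beta> K)^2 = (real m)^2 / (8 * qf K)^2" unfolding \<beta>_def by (rule power_divide)
      also have "\<dots> = (real m)^2 / (64 * (real K * sqrt (real K)))" by (simp add: power_mult_distrib qf_sq)
      finally have "(\<beta> K)^2 = (real m)^2 / (64 * (real K * sqrt (real K)))" .
      moreover have "(8::real) * (a / (64 * d)) = a / 8 * (1 / d)" for a d by (simp add: field_simps)
      ultimately show ?thesis by (simp only:)
    qed
    then show "(2 * \<beta> K + 2)^2 \<le> real m ^ 2 / 8 * (1 / (real K * sqrt (real K))) + 8"
      using sq_bound[of "\<beta> K"] by linarith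
  qed
  also have "\<dots> = real m ^ 2 / 8 * (\<Sum>K\<in>{1..<m}. 1 / (real K * sqrt (real K))) + 8 * real (m - 1)"
    by (simp add: sum.distrib sum_distrib_left)
  also have "\<dots> \<le> real m ^ 2 / 8 * 3 + 8 * real m"
  proof -
    have mS: "m = Suc (m - 1)" using m100 by simp
    have eq: "{1..<m} = {1..m-1}" by (subst mS, subst atLeastLessThanSuc_atLeastAtMost) simp
    have S3: "(\<Sum>K\<in>{1..<m}. 1 / (real K * sqrt (real K))) \<le> 3" unfolding eq by (rule sum_bound)
    have "real m ^ 2 / 8 * (\<Sum>K\<in>{1..<m}. 1 / (real K * sqrt (real K))) \<le> real m ^ 2 / 8 * 3"
      by (rule mult_left_mono[OF S3]) simp
    moreover have "real (m-1) \<le> real m" by simp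
    ultimately show ?thesis by linarith
  qed
  finally have cB: "real (card Bad) \<le> real m ^ 2 / 8 * 3 + 8 * real m" .
  have cC: "card Cs = (m div 2) * m" unfolding Cs_def by (simp add: card_cartesian_product)
  have "m \<le> 2*(m div 2) + 1" by presburger
  then have "real m \<le> real (2*(m div 2) + 1)" by (simp only: of_nat_le_iff)
  then have "real m \<le> 2*real (m div 2) + 1" by simp
  then have "real (m div 2) \<ge> (real m - 1) / 2" by (simp add: field_simps)
  then have "(real m - 1) / 2 * real m \<le> real (m div 2) * real m"
    by (intro mult_right_mono) auto
  then have "real (card Cs) \<ge> (real m - 1) / 2 * real m" unfolding cC by simp
  moreover have "(real m - 1) / 2 * real m > real m ^ 2 / 8 * 3 + 8 * real m"
  proof -
    have m1: "real m \<ge> 100" using m100 by simp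
    then have h: "100 * real m \<le> real m * real m" by (intro mult_right_mono) auto
    have e1: "(real m - 1) / 2 * real m = (real m * real m - real m) / 2" by (simp add: algebra_simps)
    have e2: "real m ^ 2 / 8 * 3 = 3 * (real m * real m) / 8" by (simp add: power2_eq_square)
    have g: "3 * X / 8 + 8 * Y < (X - Y) / 2" if "100 * Y \<le> X" "Y \<ge> 100" for X Y :: real
      using that by (simp add: field_simps)
    show ?thesis unfolding e1 e2 using g[OF h m1] .
  qed
  ultimately have "card Bad < card Cs" using cB by linarith
  have fB: "finite Bad" unfolding Bad_def X1_def X2_def by (intro finite_UN_I finite_SigmaI) auto
  have "\<not> Cs \<subseteq> Bad"
  proof
    assume "Cs \<subseteq> Bad"
    then have "card Cs \<le> card Bad" by (rule card_mono[OF fB])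
    then show False using \<open>card Bad < card Cs\<close> by simp
  qed
  then obtain t r where tr: "(t, r) \<in> Cs" "(t, r) \<notin> Bad" by auto
  have "good m (2*t+1) r"
    unfolding good_def
  proof (intro conjI allI impI)
    show "prime m" by fact
    show "2*t+1 < m" using tr(1) unfolding Cs_def by auto
    show "odd (2*t+1)" by simp
    show "r < m" using tr(1) unfolding Cs_def by auto
    fix K assume K: "1 \<le> K \<and> K < m"
    then have "(t, r) \<notin> X1 K \<times> X2 K" using tr(2) unfolding Bad_def by auto
    then have "\<not> real (dd m (K*(2*t+1))) < \<beta> K \<or> \<not> real (dd m (K*r)) < \<beta> K"
      using tr(1) unfolding X1_def X2_def Cs_def by auto
    then show "real m / (8 * qf K) \<le> real (max (dd m (K*(2*t+1))) (dd m (K*r)))"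
      unfolding \<beta>_def by (auto simp: max_def)
  qed
  then show ?thesis by blast
qed



definition pick :: "nat \<Rightarrow> nat \<times> nat \<times> nat" where
  "pick B = (SOME x. B < fst x \<and> good (fst x) (fst (snd x)) (snd (snd x)))"

lemma pick_ok: "B < fst (pick B) \<and> good (fst (pick B)) (fst (snd (pick B))) (snd (snd (pick B)))"
proof -
  obtain m where m: "prime m" "max B 100 < m" using bigger_prime by blast
  then obtain p r where "good m p r" using good_exists by (metis less_imp_le max.strict_boundedE)
  then have "\<exists>x. B < fst x \<and> good (fst x) (fst (snd x)) (snd (snd x))"
    using m by (intro exI[of _ "(m,p,r)"]) auto
  then show ?thesis unfolding pick_def by (rule someI_ex)
qed

definition ee :: "real \<Rightarrow> nat \<Rightarrow> nat" where "ee \<theta> m = max 1 (nat \<lfloor>2*\<theta>*real m\<rfloor>)"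

fun Sq :: "real \<Rightarrow> nat \<Rightarrow> nat" where
  "Sq \<theta> 0 = 0"
| "Sq \<theta> (Suc j) = Sq \<theta> j + 2 * fst (pick (Sq \<theta> j)) * ee \<theta> (fst (pick (Sq \<theta> j)))"

definition mm :: "real \<Rightarrow> nat \<Rightarrow> nat" where "mm \<theta> j = fst (pick (Sq \<theta> j))"
definition pp :: "real \<Rightarrow> nat \<Rightarrow> nat" where "pp \<theta> j = fst (snd (pick (Sq \<theta> j)))"
definition rr :: "real \<Rightarrow> nat \<Rightarrow> nat" where "rr \<theta> j = snd (snd (pick (Sq \<theta> j)))"

lemma Sq_Suc: "Sq \<theta> (Suc j) = Sq \<theta> j + 2 * mm \<theta> j * ee \<theta> (mm \<theta> j)"
  by (simp add: mm_def)

declare Sq.simps(2)[simp del]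

lemma mm_good: "good (mm \<theta> j) (pp \<theta> j) (rr \<theta> j)" and Sq_mm: "Sq \<theta> j < mm \<theta> j"
  using pick_ok[of "Sq \<theta> j"] unfolding mm_def pp_def rr_def by auto

lemma ee_ge1: "1 \<le> ee \<theta> m" unfolding ee_def by simp

lemma ee_upper: "0 \<le> \<theta> \<Longrightarrow> real (ee \<theta> m) \<le> 1 + 2*\<theta>*real m"
  unfolding ee_def by (simp add: max_def) linarith

lemma ee_lower: "real (ee \<theta> m) \<ge> 2*\<theta>*real m - 1"
  unfolding ee_def by (simp add: max_def) linarith

lemma mm_pos: "0 < mm \<theta> j" using Sq_mm[of \<theta> j] by simp

lemma Sq_step: "Sq \<theta> j + 2 * mm \<theta> j \<le> Sq \<theta> (Suc j)"
  unfolding Sq_Suc using ee_ge1[of \<theta> "mm \<theta> j"] by simp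

lemma Sq_strict: "strict_mono (Sq \<theta>)"
proof (rule strict_monoI_Suc)
  fix j show "Sq \<theta> j < Sq \<theta> (Suc j)" using Sq_step[of \<theta> j] mm_pos[of \<theta> j] by simp
qed

lemma Sq_ge: "j \<le> Sq \<theta> j"
  using strict_mono_imp_increasing[OF Sq_strict] by simp

definition reg :: "real \<Rightarrow> nat \<Rightarrow> nat" where "reg \<theta> n = (LEAST j. n < Sq \<theta> (Suc j))"

lemma reg_props: "Sq \<theta> (reg \<theta> n) \<le> n \<and> n < Sq \<theta> (Suc (reg \<theta> n))"
proof -
  have ex: "n < Sq \<theta> (Suc n)" using Sq_ge[of "Suc n" \<theta>] by simp
  have a: "n < Sq \<theta> (Suc (reg \<theta> n))" unfolding reg_def by (rule LeastI[of _ n]) (rule ex)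
  have b: "Sq \<theta> (reg \<theta> n) \<le> n"
  proof (cases "reg \<theta> n")
    case 0 then show ?thesis by simp
  next
    case (Suc j)
    then have "j < reg \<theta> n" by simp
    then have "\<not> n < Sq \<theta> (Suc j)" unfolding reg_def by (rule not_less_Least)
    then show ?thesis using Suc by simp
  qed
  show ?thesis using a b by simp
qed

lemma reg_unique: assumes "Sq \<theta> j \<le> n" "n < Sq \<theta> (Suc j)" shows "reg \<theta> n = j"
proof -
  have r: "Sq \<theta> (reg \<theta> n) \<le> n" "n < Sq \<theta> (Suc (reg \<theta> n))" using reg_props by auto
  show ?thesis
  proof (rule ccontr)
    assume "reg \<theta> n \<noteq> j"
    then consider "reg \<theta> n < j" | "j < reg \<theta> n" by linarith
    then show False
    proof cases
      case 1
      then have "Suc (reg \<theta> n) \<le> j" by simp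
      then have "Sq \<theta> (Suc (reg \<theta> n)) \<le> Sq \<theta> j" using Sq_strict[of \<theta>] by (simp only: strict_mono_less_eq)
      then show False using r assms by simp
    next
      case 2
      then have "Suc j \<le> reg \<theta> n" by simp
      then have "Sq \<theta> (Suc j) \<le> Sq \<theta> (reg \<theta> n)" using Sq_strict[of \<theta>] by (simp only: strict_mono_less_eq)
      then show False using r assms by simp
    qed
  qed
qed

definition W :: "real \<Rightarrow> nat \<Rightarrow> nat" where
  "W \<theta> n = Pw (mm \<theta> (reg \<theta> n)) (pp \<theta> (reg \<theta> n)) (rr \<theta> (reg \<theta> n)) n"

lemma W_range: "range (W \<theta>) \<subseteq> {0,1,2}"
proof
  fix y assume "y \<in> range (W \<theta>)"
  then obtain n where y: "y = W \<theta> n" by auto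
  let ?j = "reg \<theta> n"
  have "good (mm \<theta> ?j) (pp \<theta> ?j) (rr \<theta> ?j)" by (rule mm_good)
  then have "pp \<theta> ?j \<le> mm \<theta> ?j" "rr \<theta> ?j \<le> mm \<theta> ?j" unfolding good_def by auto
  then show "y \<in> {0,1,2}" unfolding y W_def by (rule Pw_vals)
qed

lemma W_on_region: assumes "Sq \<theta> j \<le> x" "x < Sq \<theta> (Suc j)"
  shows "W \<theta> x = Pw (mm \<theta> j) (pp \<theta> j) (rr \<theta> j) x"
  unfolding W_def using reg_unique[OF assms] by simp

lemma factor_region: assumes "Sq \<theta> j \<le> s" "s + L \<le> Sq \<theta> (Suc j)"
  shows "factor (W \<theta>) s L = factor (Pw (mm \<theta> j) (pp \<theta> j) (rr \<theta> j)) s L"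
  unfolding factor_def using W_on_region assms by (auto intro!: map_cong)



lemma qf_nonneg: "0 \<le> qf K" unfolding qf_def by simp

lemma seg:
  fixes \<theta> :: real
  assumes \<theta>: "0 \<le> \<theta>" and M: "0 < M"
    and eq: "\<forall>k<e. \<forall>k'<e. abelian_equiv (factor (W \<theta>) (i+k*M) M) (factor (W \<theta>) (i+k'*M) M)"
    and kab: "ka \<le> kb" "kb \<le> e" and lo: "Sq \<theta> j \<le> i + ka*M" and hi: "i + kb*M \<le> Sq \<theta> (Suc j)"
  shows "real (kb - ka) \<le> (if 2 * mm \<theta> j dvd M then \<theta> * M + 1 else 16 * qf M + 1)"
proof -
  define m where "m = mm \<theta> j"
  define p where "p = pp \<theta> j"
  define r where "r = rr \<theta> j"
  define n where "n = kb - ka"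
  define s where "s = i + ka*M"
  have gd: "good m p r" unfolding m_def p_def r_def by (rule mm_good)
  then have pm: "prime m" "p < m" "odd p" "r < m"
    and gK: "\<And>K. 1 \<le> K \<Longrightarrow> K < m \<Longrightarrow> real m / (8 * qf K) \<le> real (max (dd m (K*p)) (dd m (K*r)))"
    unfolding good_def by auto
  have m0: "0 < m" using pm(1) prime_gt_0_nat by blast
  have blocks: "factor (W \<theta>) (s + k*M) M = factor (Pw m p r) (s+k*M) M" if "k < n" for k
    unfolding m_def p_def r_def
  proof (rule factor_region)
    show "Sq \<theta> j \<le> s + k*M" using lo unfolding s_def by simp
    have "ka + k + 1 \<le> kb" using that unfolding n_def by simp
    then have "(ka + k + 1) * M \<le> kb * M" by (rule mult_right_mono) simp
    then have "s + k*M + M \<le> i + kb*M" unfolding s_def by (simp add: algebra_simps)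
    then show "s + k*M + M \<le> Sq \<theta> (Suc j)" using hi by simp
  qed
  have eqP: "\<forall>k<n. \<forall>k'<n. abelian_equiv (factor (Pw m p r) (s+k*M) M) (factor (Pw m p r) (s+k'*M) M)"
  proof (intro allI impI)
    fix k k' assume k: "k < n" and k': "k' < n"
    have "abelian_equiv (factor (W \<theta>) (i+(ka+k)*M) M) (factor (W \<theta>) (i+(ka+k')*M) M)"
      using eq k k' kab unfolding n_def by auto
    then show "abelian_equiv (factor (Pw m p r) (s+k*M) M) (factor (Pw m p r) (s+k'*M) M)"
      using blocks[OF k] blocks[OF k'] unfolding s_def by (simp add: algebra_simps)
  qed
  show ?thesis
  proof (cases "2 * m dvd M")
    case True
    have "n * M \<le> Sq \<theta> (Suc j) - Sq \<theta> j"
    proof -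
      have "ka + n = kb" using kab unfolding n_def by simp
      then have "(ka + n) * M = kb*M" by simp
      then have "i + ka*M + n*M = i + kb*M" by (simp only: add_mult_distrib add.assoc)
      then show ?thesis using lo hi by linarith
    qed
    also have "\<dots> = 2 * m * ee \<theta> m" unfolding m_def Sq_Suc by simp
    finally have "real (n * M) \<le> real (2 * m * ee \<theta> m)" by (simp only: of_nat_le_iff)
    then have h1: "real n * real M \<le> 2 * real m * real (ee \<theta> m)" by simp
    have "2 * m \<le> M" using True M by (simp add: dvd_imp_le)
    then have "real (2 * m) \<le> real M" by (simp only: of_nat_le_iff)
    then have mM: "2 * real m \<le> real M" by simp
    have "2 * real m * real (ee \<theta> m) \<le> 2 * real m * (1 + 2*\<theta>*real m)"
      using ee_upper[OF \<theta>] by (intro mult_left_mono) auto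
    also have "\<dots> = 2 * real m + \<theta> * (2 * real m) * (2 * real m)" by (simp add: algebra_simps)
    also have "\<dots> \<le> real M + \<theta> * real M * real M"
      using mM \<theta> by (intro add_mono mult_mono) auto
    finally have "real n * real M \<le> (1 + \<theta> * real M) * real M" using h1 by (simp add: algebra_simps)
    then have "real n \<le> 1 + \<theta> * real M" using M by simp
    then show ?thesis using True unfolding n_def m_def by (simp add: algebra_simps)
  next
    case False
    have "real n \<le> 16 * qf M + 1"
    proof (cases "n < 2")
      case True
      then show ?thesis using qf_nonneg[of M] by simp
    next
      case False
      then have n2: "2 \<le> n" by simp
      show ?thesis
      proof (cases "m dvd M")
        case True
        have "odd (M div m)"
        proof
          assume "even (M div m)"
          then obtain t where "M div m = 2*t" by blast
          moreover have "M = m * (M div m)" using True by simp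
          ultimately have "M = 2 * m * t" by simp
          then show False using \<open>\<not> 2 * m dvd M\<close> by simp
        qed
        then show ?thesis using Pw_bound1(2)[OF m0 pm(2) pm(4) eqP n2 True _ pm(3)] by blast
      next
        case False
        define K where "K = M mod m"
        have K1: "1 \<le> K" using False unfolding K_def by (simp add: dvd_eq_mod_eq_0)
        have Km: "K < m" unfolding K_def using m0 by simp
        have KM: "K \<le> M" unfolding K_def by simp
        have "(M*p) mod m = (K*p) mod m" unfolding K_def by (simp add: mod_mult_left_eq)
        then have ddp: "dd m (M*p) = dd m (K*p)" using dd_mod[of m "M*p"] dd_mod[of m "K*p"] by simp
        have "(M*r) mod m = (K*r) mod m" unfolding K_def by (simp add: mod_mult_left_eq)
        then have ddr: "dd m (M*r) = dd m (K*r)" using dd_mod[of m "M*r"] dd_mod[of m "K*r"] by simp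
        have b1: "n div 2 * dd m (K*p) < m" using Pw_bound1(1)[OF m0 pm(2) pm(4) eqP n2] ddp by simp
        have b2: "n div 2 * dd m (K*r) < m" using Pw_bound2[OF m0 pm(2) pm(4) eqP n2] ddr by simp
        define A where "A = max (dd m (K*p)) (dd m (K*r))"
        have bA: "n div 2 * A < m" using b1 b2 unfolding A_def by (simp add: max_def)
        have qK: "0 < qf K" using qf_pos[OF K1] .
        have gA: "real m / (8 * qf K) \<le> real A" using gK[OF K1 Km] unfolding A_def .
        have "real (n div 2) * (real m / (8 * qf K)) \<le> real (n div 2) * real A"
          using gA by (intro mult_left_mono) auto
        also have "\<dots> < real m"
        proof -
          have "real (n div 2 * A) < real m" using bA by (simp only: of_nat_less_iff)
          then show ?thesis by simp
        qed
        finally have "real (n div 2) * (real m / (8 * qf K)) < real m" .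
        then have "real (n div 2) * real m < 8 * qf K * real m" using qK by (simp add: field_simps)
        then have nd: "real (n div 2) < 8 * qf K" using m0 by simp
        have "n \<le> 2 * (n div 2) + 1" by simp
        then have "real n \<le> real (2 * (n div 2) + 1)" by (simp only: of_nat_le_iff)
        then have "real n \<le> 2 * real (n div 2) + 1" by simp
        also have "\<dots> \<le> 16 * qf K + 1" using nd by simp
        also have "\<dots> \<le> 16 * qf M + 1" using qf_mono[OF KM] by simp
        finally show ?thesis .
      qed
    qed
    then show ?thesis using False unfolding n_def m_def by simp
  qed
qed



lemma div_bounds: "0 < (M::nat) \<Longrightarrow> x div M * M \<le> x \<and> x < (x div M + 1) * M"
proof -
  assume M: "0 < M"
  have a: "x div M * M + x mod M = x" by simp
  have b: "x mod M < M" using M by simp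
  have c: "(x div M + 1) * M = x div M * M + M" by simp
  show ?thesis using a b c by linarith
qed

lemma rle: "(a::nat) \<le> b \<Longrightarrow> real a \<le> real b" by simp

lemma upper:
  fixes \<theta> :: real
  assumes \<theta>: "0 \<le> \<theta>" and M: "0 < M" and e: "0 < e"
    and eq: "\<forall>k<e. \<forall>k'<e. abelian_equiv (factor (W \<theta>) (i+k*M) M) (factor (W \<theta>) (i+k'*M) M)"
  shows "real e \<le> \<theta> * M + 3 * (16 * qf M + 1) + 5"
proof -
  define G where "G = 16 * qf M + 1"
  have G1: "1 \<le> G" unfolding G_def using qf_nonneg[of M] by simp
  have tM: "0 \<le> \<theta> * real M" using \<theta> by simp
  have nbb: "(if 2 * mm \<theta> j dvd M then \<theta> * M + 1 else G) \<le> \<theta>*M + G" for j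
    using G1 tM by auto
  have nb0: "0 \<le> (if 2 * mm \<theta> j dvd M then \<theta> * M + 1 else G)" for j
    using G1 tM by auto
  have segj: "real (kb - ka) \<le> (if 2 * mm \<theta> j dvd M then \<theta> * M + 1 else G)"
    if "ka \<le> kb" "kb \<le> e" "Sq \<theta> j \<le> i + ka*M" "i + kb*M \<le> Sq \<theta> (Suc j)" for ka kb j
    using seg[OF \<theta> M eq that] unfolding G_def .
  define E where "E = i + e*M"
  have E1: "1 \<le> E" using e M unfolding E_def by (simp add: Suc_le_eq)
  define j where "j = reg \<theta> (E - 1)"
  have jr: "Sq \<theta> j \<le> E - 1" "E - 1 < Sq \<theta> (Suc j)" using reg_props unfolding j_def by auto
  have Ehi: "i + e*M \<le> Sq \<theta> (Suc j)" using jr E1 unfolding E_def by linarith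
  have main: "real e \<le> \<theta> * M + 3 * G + 5"
  proof (cases "Sq \<theta> j \<le> i")
    case True
    have "real (e - 0) \<le> (if 2 * mm \<theta> j dvd M then \<theta> * M + 1 else G)"
      by (rule segj) (use True Ehi in auto)
    then have "real e \<le> \<theta> * M + G" using nbb[of j] by simp
    then show "real e \<le> \<theta> * M + 3 * G + 5" using G1 by linarith
  next
    case False
    define c where "c = (Sq \<theta> j - i) div M"
    have cb: "c*M \<le> Sq \<theta> j - i" "Sq \<theta> j - i < (c+1)*M" using div_bounds[OF M] unfolding c_def by auto
    have ce: "c < e"
    proof -
      have "c*M < e*M" using cb jr E1 False unfolding E_def by linarith
      then show ?thesis by simp
    qed
    have s1: "real (e - (c+1)) \<le> (if 2 * mm \<theta> j dvd M then \<theta> * M + 1 else G)"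
      by (rule segj) (use ce cb False Ehi in auto)
    have pre: "i + c*M \<le> Sq \<theta> j" using cb False by linarith
    show "real e \<le> \<theta> * M + 3 * G + 5"
    proof (cases "2 * mm \<theta> j dvd M")
      case True
      have "Sq \<theta> j - i < M"
      proof -
        have "Sq \<theta> j < mm \<theta> j" by (rule Sq_mm)
        moreover have "2 * mm \<theta> j \<le> M" using True M by (simp add: dvd_imp_le)
        ultimately show ?thesis by linarith
      qed
      then have c0: "c = 0" unfolding c_def by simp
      have "e = (e - (c+1)) + 1" using ce c0 by simp
      then have "real e = real (e - (c+1)) + 1" by simp
      moreover have "real (e - (c+1)) \<le> \<theta> * M + 1" using s1 True by simp
      ultimately show "real e \<le> \<theta> * M + 3 * G + 5" using G1 tM by linarith
    next
      case False2: False
      have s1': "real (e - (c+1)) \<le> G" using s1 False2 by simp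
      have j0: "j \<noteq> 0"
      proof
        assume "j = 0"
        then show False using False by simp
      qed
      then obtain j' where jj: "j = Suc j'" by (cases j) auto
      show "real e \<le> \<theta> * M + 3 * G + 5"
      proof (cases "Sq \<theta> j' \<le> i")
        case True
        have s2: "real (c - 0) \<le> (if 2 * mm \<theta> j' dvd M then \<theta> * M + 1 else G)"
        proof (rule segj)
          show "0 \<le> c" by simp
          show "c \<le> e" using ce by simp
          show "Sq \<theta> j' \<le> i + 0 * M" using True by simp
          show "i + c * M \<le> Sq \<theta> (Suc j')" using pre jj by simp
        qed
        have s2': "real c \<le> \<theta>*M + G" using s2 nbb[of j'] by simp
        have "e = (e - (c+1)) + 1 + c" using ce by simp
        then have "real e = real (e - (c+1)) + 1 + real c" by simp
        then show "real e \<le> \<theta> * M + 3 * G + 5" using s1' s2' G1 tM by linarith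
      next
        case False3: False
        define c' where "c' = (Sq \<theta> j' - i) div M"
        have cb': "c'*M \<le> Sq \<theta> j' - i" "Sq \<theta> j' - i < (c'+1)*M" using div_bounds[OF M] unfolding c'_def by auto
        have Sjj: "Sq \<theta> j' + 2 * mm \<theta> j' \<le> Sq \<theta> j" unfolding jj by (rule Sq_step)
        have cc: "c' \<le> c" unfolding c_def c'_def using Sjj by (intro div_le_mono) linarith
        have Lb: "real (c - (c'+1)) \<le> (if 2 * mm \<theta> j' dvd M then \<theta> * M + 1 else G)"
        proof (cases "c' + 1 \<le> c")
          case True
          show ?thesis by (rule segj) (use True ce cb' pre jj False3 in auto)
        next
          case False
          then show ?thesis using nb0[of j'] by simp
        qed
        have esplit: "e \<le> (e - (c+1)) + (c - (c'+1)) + c' + 2" using ce cc by linarith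
        have re0: "real e \<le> real ((e - (c+1)) + (c - (c'+1)) + c' + 2)" by (rule rle[OF esplit])
        then have re: "real e \<le> real (e - (c+1)) + real (c - (c'+1)) + real c' + 2" by simp
        show "real e \<le> \<theta> * M + 3 * G + 5"
        proof (cases "2 * mm \<theta> j' dvd M")
          case True
          have "Sq \<theta> j' - i < M"
          proof -
            have "Sq \<theta> j' < mm \<theta> j'" by (rule Sq_mm)
            moreover have "2 * mm \<theta> j' \<le> M" using True M by (simp add: dvd_imp_le)
            ultimately show ?thesis by linarith
          qed
          then have "c' = 0" unfolding c'_def by simp
          moreover have "real (c - (c'+1)) \<le> \<theta> * M + 1" using Lb True by simp
          ultimately show "real e \<le> \<theta> * M + 3 * G + 5" using re s1' G1 tM by linarith
        next
          case False4: False
          have Lb': "real (c - (c'+1)) \<le> G" using Lb False4 by simp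
          have "3 * c' * M < (c + 1) * M"
          proof -
            have "c' * M < mm \<theta> j'" using cb' Sq_mm[of \<theta> j'] by linarith
            then have "3 * c' * M \<le> 2 * mm \<theta> j' + c' * M" by linarith
            also have "\<dots> \<le> Sq \<theta> j - i" using Sjj cb' False3 by linarith
            also have "\<dots> < (c+1)*M" using cb by simp
            finally show ?thesis .
          qed
          then have "3 * c' < c + 1" using M by (simp only: mult_less_cancel2)
          then have "2 * c' \<le> (c - (c'+1)) + 1" by linarith
          then have "real (2 * c') \<le> real ((c - (c'+1)) + 1)" by (rule rle)
          then have "2 * real c' \<le> real (c - (c'+1)) + 1" by simp
          then have "2 * real c' \<le> G + 1" using Lb' by linarith
          then show "real e \<le> \<theta> * M + 3 * G + 5" using re s1' Lb' G1 tM by linarith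
        qed
      qed
    qed
  qed
  then show ?thesis unfolding G_def .
qed



lemma FF_per: "0 < m \<Longrightarrow> FF m q (y + m) = FF m q y + q"
proof -
  assume m: "0 < m"
  have "(y + m) * q = y*q + q*m" by (simp add: algebra_simps)
  then show ?thesis unfolding FF_def using m by simp
qed

lemma Pw_periodic: "0 < m \<Longrightarrow> Pw m p r (x + 2*m) = Pw m p r x"
proof -
  assume m: "0 < m"
  have d: "(x + 2*m) div 2 = x div 2 + m" by simp
  have ev: "even (x + 2*m) = even x" by simp
  have a: "FF m q (x div 2 + m + 1) = FF m q (x div 2 + 1) + q" for q
    using FF_per[OF m, of q "x div 2 + 1"] by (simp add: add_ac)
  have b: "FF m q (x div 2 + m) = FF m q (x div 2) + q" for q
    using FF_per[OF m, of q "x div 2"] by simp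
  show ?thesis unfolding Pw_def d ev a b by simp
qed

lemma periodic_k: fixes P :: "nat \<Rightarrow> 'a" and k d x :: nat shows "(\<And>x. P (x + d) = P x) \<Longrightarrow> P (x + k*d) = P x"
proof (induction k)
  case 0 then show ?case by simp
next
  case (Suc k)
  have "P (x + Suc k * d) = P ((x + k*d) + d)" by (simp add: algebra_simps)
  also have "\<dots> = P (x + k*d)" by (rule Suc.prems)
  finally show ?case using Suc by simp
qed

lemma factor_alt: "factor w s L = map (\<lambda>t. w (t + s)) [0..<L]"
proof -
  have "map (\<lambda>t. w (t + s)) [0..<L] = map w (map (\<lambda>t. t + s) [0..<L])" by simp
  also have "\<dots> = map w [s..<L + s]" by (simp only: map_add_upt)
  finally show ?thesis unfolding factor_def by (simp add: add.commute)
qed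

lemma lower_power:
  shows "has_abelian_power (W \<theta>) (2 * mm \<theta> j) (ee \<theta> (mm \<theta> j))"
proof -
  define m where "m = mm \<theta> j"
  define P where "P = Pw m (pp \<theta> j) (rr \<theta> j)"
  have m0: "0 < m" unfolding m_def by (rule mm_pos)
  have per: "P (x + 2*m) = P x" for x unfolding P_def using Pw_periodic[OF m0] .
  have blk: "factor (W \<theta>) (Sq \<theta> j + k*(2*m)) (2*m) = factor P (Sq \<theta> j) (2*m)" if "k < ee \<theta> m" for k
  proof -
    have "factor (W \<theta>) (Sq \<theta> j + k*(2*m)) (2*m) = factor P (Sq \<theta> j + k*(2*m)) (2*m)"
      unfolding P_def m_def
    proof (rule factor_region)
      show "Sq \<theta> j \<le> Sq \<theta> j + k * (2 * mm \<theta> j)" by simp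
      have "k + 1 \<le> ee \<theta> m" using that by simp
      then have "(k+1) * (2*m) \<le> ee \<theta> m * (2*m)" by (rule mult_right_mono) simp
      then have "Sq \<theta> j + k * (2 * m) + 2 * m \<le> Sq \<theta> j + 2 * m * ee \<theta> m" by (simp add: algebra_simps)
      then show "Sq \<theta> j + k * (2 * mm \<theta> j) + 2 * mm \<theta> j \<le> Sq \<theta> (Suc j)"
        unfolding Sq_Suc m_def by simp
    qed
    also have "\<dots> = factor P (Sq \<theta> j) (2*m)"
      unfolding factor_alt
    proof (rule map_cong[OF refl])
      fix t
      have "P (t + (Sq \<theta> j + k*(2*m))) = P ((t + Sq \<theta> j) + k*(2*m))" by (simp add: algebra_simps)
      also have "\<dots> = P (t + Sq \<theta> j)" by (rule periodic_k) (rule per)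
      finally show "P (t + (Sq \<theta> j + k*(2*m))) = P (t + Sq \<theta> j)" .
    qed
    finally show ?thesis .
  qed
  show ?thesis
    unfolding has_abelian_power_def
  proof (intro conjI exI allI impI)
    show "0 < 2 * mm \<theta> j" using m0 unfolding m_def by simp
    show "0 < ee \<theta> (mm \<theta> j)" using ee_ge1[of \<theta> "mm \<theta> j"] by simp
    fix k k' assume k: "k < ee \<theta> (mm \<theta> j)" and k': "k' < ee \<theta> (mm \<theta> j)"
    show "abelian_equiv (factor (W \<theta>) (Sq \<theta> j + k * (2 * mm \<theta> j)) (2 * mm \<theta> j))
                        (factor (W \<theta>) (Sq \<theta> j + k' * (2 * mm \<theta> j)) (2 * mm \<theta> j))"
      using blk[of k] blk[of k'] k k' unfolding m_def abelian_equiv_def by simp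
  qed
qed

lemma A_upper:
  assumes \<theta>: "0 \<le> \<theta>" and M: "0 < M"
  shows "abelian_period_exp (W \<theta>) M \<le> ereal (\<theta> * M + 3 * (16 * qf M + 1) + 5)"
  unfolding abelian_period_exp_def
proof (rule SUP_least)
  fix e assume "e \<in> {e. has_abelian_power (W \<theta>) M e}"
  then have "0 < e" and "\<exists>i. \<forall>j<e. \<forall>k<e. abelian_equiv (factor (W \<theta>) (i + j*M) M) (factor (W \<theta>) (i + k*M) M)"
    unfolding has_abelian_power_def by auto
  then obtain i where e: "0 < e" and eq: "\<forall>j<e. \<forall>k<e. abelian_equiv (factor (W \<theta>) (i + j*M) M) (factor (W \<theta>) (i + k*M) M)"
    by blast
  show "ereal (real e) \<le> ereal (\<theta> * M + 3 * (16 * qf M + 1) + 5)"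
    using upper[OF \<theta> M e eq] by simp
qed

lemma A_lower: "ereal (real (ee \<theta> (mm \<theta> j))) \<le> abelian_period_exp (W \<theta>) (2 * mm \<theta> j)"
  unfolding abelian_period_exp_def
  by (rule SUP_upper) (use lower_power in simp)

lemma asym: "((\<lambda>x::real. (48 * sqrt (x * sqrt x) + 8) / x) \<longlongrightarrow> 0) at_top"
  by real_asymp



theorem theorem1:
  fixes \<theta> :: real
  assumes "0 \<le> \<theta>"
  shows "\<exists>w :: nat \<Rightarrow> nat. range w \<subseteq> {0, 1, 2} \<and>
           abelian_critical_exponent w = ereal \<theta>"
proof (intro exI conjI)
  show "range (W \<theta>) \<subseteq> {0,1,2}" by (rule W_range)
  define f where "f M = abelian_period_exp (W \<theta>) M / ereal (real M)" for M
  define g where "g M = \<theta> + (48 * qf M + 8) / real M" for M :: nat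
  have fg: "f M \<le> ereal (g M)" if M: "0 < M" for M
  proof -
    have "f M \<le> ereal (\<theta> * M + 3*(16*qf M + 1) + 5) / ereal (real M)"
      unfolding f_def by (rule ereal_divide_right_mono[OF A_upper[OF assms M]]) (use M in simp)
    also have "ereal (\<theta> * M + 3*(16*qf M + 1) + 5) / ereal (real M) = ereal ((\<theta> * M + 3*(16*qf M + 1) + 5) / real M)"
      using M by simp
    also have "(\<theta> * M + 3*(16*qf M + 1) + 5) / real M = g M"
      using M unfolding g_def by (simp add: field_simps)
    finally show ?thesis .
  qed
  have glim: "g \<longlonglongrightarrow> \<theta>"
  proof -
    have "(\<lambda>M. (\<lambda>x::real. (48 * sqrt (x * sqrt x) + 8) / x) (real M)) \<longlonglongrightarrow> 0"
      using filterlim_compose[OF asym filterlim_real_sequentially] .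
    then have "(\<lambda>M. (48 * qf M + 8) / real M) \<longlonglongrightarrow> 0"
      unfolding qf_def by simp
    then have "(\<lambda>M. \<theta> + (48 * qf M + 8) / real M) \<longlonglongrightarrow> \<theta> + 0"
      by (intro tendsto_add tendsto_const)
    then show ?thesis unfolding g_def by simp
  qed
  have up: "limsup f \<le> ereal \<theta>"
  proof -
    have "limsup f \<le> limsup (\<lambda>M. ereal (g M))"
      by (rule Limsup_mono) (use fg in \<open>auto simp: eventually_sequentially intro!: exI[of _ 1]\<close>)
    also have "limsup (\<lambda>M. ereal (g M)) = ereal \<theta>"
      by (rule lim_imp_Limsup) (simp_all add: glim)
    finally show ?thesis .
  qed
  define \<sigma> where "\<sigma> j = 2 * mm \<theta> j" for j
  have sm: "strict_mono \<sigma>"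
  proof (rule strict_monoI_Suc)
    fix j
    have "mm \<theta> j < Sq \<theta> (Suc j)" using Sq_step[of \<theta> j] mm_pos[of \<theta> j] by simp
    also have "\<dots> < mm \<theta> (Suc j)" by (rule Sq_mm)
    finally show "\<sigma> j < \<sigma> (Suc j)" unfolding \<sigma>_def by simp
  qed
  define h where "h j = \<theta> - 1 / (2 * real (mm \<theta> j))" for j
  have hf: "ereal (h j) \<le> (f \<circ> \<sigma>) j" for j
  proof -
    define m where "m = mm \<theta> j"
    have m0: "0 < m" unfolding m_def by (rule mm_pos)
    have "ereal (real (ee \<theta> m)) / ereal (real (2*m)) \<le> (f \<circ> \<sigma>) j"
      unfolding f_def \<sigma>_def comp_def m_def
      by (rule ereal_divide_right_mono[OF A_lower]) (use m0 m_def in simp)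
    moreover have "ereal (real (ee \<theta> m)) / ereal (real (2*m)) = ereal (real (ee \<theta> m) / (2 * real m))"
      using m0 by simp
    moreover have "h j \<le> real (ee \<theta> m) / (2 * real m)"
    proof -
      have "2*\<theta>*real m - 1 \<le> real (ee \<theta> m)" by (rule ee_lower)
      then have "(2*\<theta>*real m - 1) / (2 * real m) \<le> real (ee \<theta> m) / (2 * real m)"
        using m0 by (intro divide_right_mono) auto
      moreover have "(2*\<theta>*real m - 1) / (2 * real m) = h j"
        unfolding h_def m_def[symmetric] using m0 by (simp add: field_simps)
      ultimately show ?thesis by simp
    qed
    ultimately show ?thesis by (metis ereal_less_eq(3) order_trans)
  qed
  have hlim: "h \<longlonglongrightarrow> \<theta>"
  proof -
    have z: "(\<lambda>j. 1 / (2 * real (mm \<theta> j))) \<longlonglongrightarrow> 0"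
    proof (rule tendsto_sandwich[where f = "\<lambda>_. 0" and h = "\<lambda>j. inverse (real (Suc j))"])
      show "\<forall>\<^sub>F j in sequentially. 0 \<le> 1 / (2 * real (mm \<theta> j))" by simp
      show "\<forall>\<^sub>F j in sequentially. 1 / (2 * real (mm \<theta> j)) \<le> inverse (real (Suc j))"
      proof (rule always_eventually, rule allI)
        fix j
        have "Suc j \<le> mm \<theta> j" using Sq_ge[of j \<theta>] Sq_mm[of \<theta> j] by simp
        then have "real (Suc j) \<le> 2 * real (mm \<theta> j)" by linarith
        then show "1 / (2 * real (mm \<theta> j)) \<le> inverse (real (Suc j))"
          by (simp add: inverse_eq_divide frac_le)
      qed
      show "(\<lambda>_. 0::real) \<longlonglongrightarrow> 0" by simp
      show "(\<lambda>j. inverse (real (Suc j))) \<longlonglongrightarrow> 0" by (rule LIMSEQ_inverse_real_of_nat)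
    qed
    have "(\<lambda>j. \<theta> - 1 / (2 * real (mm \<theta> j))) \<longlonglongrightarrow> \<theta> - 0"
      by (intro tendsto_diff tendsto_const z)
    then show ?thesis unfolding h_def by simp
  qed
  have low: "ereal \<theta> \<le> limsup f"
  proof -
    have "ereal \<theta> = limsup (\<lambda>j. ereal (h j))"
      by (rule lim_imp_Limsup[symmetric]) (simp_all add: hlim)
    also have "\<dots> \<le> limsup (f \<circ> \<sigma>)"
      by (intro Limsup_mono always_eventually allI hf)
    also have "\<dots> \<le> limsup f" by (rule limsup_subseq_mono[OF sm])
    finally show ?thesis .
  qed
  have "abelian_critical_exponent (W \<theta>) = limsup f"
    unfolding abelian_critical_exponent_def f_def ..
  then show "abelian_critical_exponent (W \<theta>) = ereal \<theta>" using up low by simp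
qed

end
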